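(* Let $Sm(n)$ be the integer whose decimal expansion is the concatenation of $1,2,\ldots,n+1$. For every integer $n\geqslant 0$, put $$l=\lceil \log_{10}(n+2)\rceil,\qquad t_l=10^{l-1}-1,$$ $$\alpha_l=-\frac{10^{2l-1}+9\cdot 10^{l-1}}{(10^l-1)^2},\qquad \mu_l=-\frac{1}{10^l-1},\qquad \theta_l=\frac{s_2-2s_1+s_0}{(10^l-1)^2},$$ where $s_0=Sm(t_l)$, $s_1=Sm(t_l+1)$, $s_2=Sm(t_l+2)$. Then $$Sm(n)=\alpha_l+\mu_l\,(n-t_l)+\theta_l\,10^{l(n-t_l)}.$$
   Context: $Sm(0)=1$, $Sm(1)=12$, $Sm(2)=123$, $\ldots$ (Smarandache consecutive numbers). *)

theory Defs
  imports Complex_Main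
begin

text \<open>Number of decimal digits of a natural number (positive numbers; ndigits 0 = 1).\<close>
fun ndigits :: "nat \<Rightarrow> nat" where
  "ndigits k = (if k < 10 then 1 else 1 + ndigits (k div 10))"

definition dconcat :: "nat \<Rightarrow> nat \<Rightarrow> nat" where
  "dconcat a b = a * 10 ^ ndigits b + b"

fun Sm :: "nat \<Rightarrow> nat" where
  "Sm 0 = 1"
| "Sm (Suc n) = dconcat (Sm n) (n + 2)"

end

theory Submission
  imports Defs
begin

declare ndigits.simps[simp del]

lemma ndigits_unf: "ndigits k = (if k < 10 then 1 else 1 + ndigits (k div 10))"
  by (rule ndigits.simps)

lemma ndigits_pos: "ndigits k \<ge> 1"
  by (subst ndigits_unf) (simp del: ndigits_unf)

lemma ndigits_bounds: "k < 10 ^ ndigits k \<and> (k \<ge> 1 \<longrightarrow> 10 ^ (ndigits k - 1) \<le> k)"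
proof (induction k rule: ndigits.induct)
  case (1 k)
  show ?case
  proof (cases "k < 10")
    case True
    then show ?thesis by (simp add: ndigits_unf[of k])
  next
    case False
    then have e: "ndigits k = 1 + ndigits (k div 10)" by (simp add: ndigits_unf[of k])
    have ih: "k div 10 < 10 ^ ndigits (k div 10)" "10 ^ (ndigits (k div 10) - 1) \<le> k div 10"
      using 1 False by auto
    have "k < 10 ^ ndigits k" using ih(1) e by simp
    moreover have "10 ^ (ndigits k - 1) \<le> k"
    proof -
      obtain d where d: "ndigits (k div 10) = Suc d" using ndigits_pos[of "k div 10"]
        by (cases "ndigits (k div 10)") auto
      have "(10::nat) ^ (ndigits k - 1) = 10 * 10 ^ d" using e d by simp
      also have "\<dots> \<le> 10 * (k div 10)" using ih(2) d by simp
      also have "\<dots> \<le> k" by simp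
      finally show ?thesis .
    qed
    ultimately show ?thesis by simp
  qed
qed

lemma ndigits_eq: "10 ^ m \<le> j \<Longrightarrow> j < 10 ^ (m+1) \<Longrightarrow> ndigits j = m + 1"
proof (induction m arbitrary: j)
  case 0
  then show ?case by (simp add: ndigits_unf[of j])
next
  case (Suc m)
  have "10 ^ m \<le> j div 10" using Suc.prems(1)
    by (simp add: less_eq_div_iff_mult_less_eq mult.commute)
  moreover have "j div 10 < 10 ^ (m+1)" using Suc.prems(2)
    by (simp add: div_less_iff_less_mult mult.commute)
  ultimately have "ndigits (j div 10) = m + 1" using Suc.IH by blast
  moreover have "(10::nat) \<le> 10 ^ Suc m" by simp
  then have "\<not> j < 10" using Suc.prems(1) by linarith
  ultimately show ?case by (simp add: ndigits_unf[of j])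
qed


lemma alg0: "(d::real) \<noteq> 0 \<Longrightarrow> d + 1 = 10*P \<Longrightarrow> -((d+1)*P+9*P)/d^2 + (-1/d)*(k+1) = (-((d+1)*P+9*P)/d^2 + (-1/d)*k)*(d+1) + (P+1+k)"
proof -
  assume a: "d \<noteq> 0" "d + 1 = 10*P"
  then have "d = 10*P - 1" by simp
  then show ?thesis using a(1) apply (simp add: field_simps power2_eq_square) by algebra
qed
lemma alg: "(Q::real) \<noteq> 1 \<Longrightarrow> Q = 10*P \<Longrightarrow> -(Q*P+9*P)/(Q-1)^2 + (-1/(Q-1))*(k+1) = (-(Q*P+9*P)/(Q-1)^2 + (-1/(Q-1))*k)*Q + (P+1+k)"
  using alg0[of "Q-1" P k] by simp

lemma Sm_closed:
  fixes m k :: nat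
  defines "p \<equiv> (10::nat) ^ m"
  defines "t \<equiv> p - 1"
  defines "Q \<equiv> (10::real) * real p"
  defines "A \<equiv> - (Q * real p + 9 * real p) / (Q - 1) ^ 2"
  defines "B \<equiv> - 1 / (Q - 1)"
  assumes "t + k + 1 < 10 ^ (m + 1)"
  shows "real (Sm (t + k)) = A + B * real k + (real (Sm t) - A) * Q ^ k"
  using assms(6)
proof (induction k)
  case 0
  then show ?case by simp
next
  case (Suc k)
  have p1: "p \<ge> 1" unfolding p_def by simp
  have Q1: "Q - 1 \<noteq> 0" unfolding Q_def using p1 by simp
  have tr: "real t = real p - 1" unfolding t_def using p1 by simp
  have nd: "ndigits (t + k + 2) = m + 1"
    apply (rule ndigits_eq)
    using Suc.prems p1 unfolding t_def p_def by auto
  have "Sm (t + Suc k) = Sm (t + k) * 10 ^ (m + 1) + (t + k + 2)"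
    using nd by (simp add: dconcat_def)
  then have "real (Sm (t + Suc k)) = real (Sm (t + k)) * Q + (real p - 1 + real k + 2)"
    unfolding Q_def p_def using tr p_def by simp
  also have "\<dots> = (A + B * real k + (real (Sm t) - A) * Q ^ k) * Q + (real p - 1 + real k + 2)"
    using Suc by simp
  also have "\<dots> = A + B * real (Suc k) + (real (Sm t) - A) * Q ^ Suc k"
    using alg[of Q "real p" "real k", folded A_def B_def] Q1 unfolding Q_def
    by (simp add: algebra_simps)
  finally show ?case .
qed


theorem corollary1:
  fixes n :: nat
  defines "l \<equiv> nat \<lceil>log 10 (real n + 2)\<rceil>"
  defines "t \<equiv> (10::nat) ^ (l - 1) - 1"
  shows "real (Sm n) =
     - ((10::real) ^ (2 * l - 1) + 9 * 10 ^ (l - 1)) / (10 ^ l - 1) ^ 2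
     + (- 1 / ((10::real) ^ l - 1)) * (real n - real t)
     + ((real (Sm (t + 2)) - 2 * real (Sm (t + 1)) + real (Sm t)) / ((10::real) ^ l - 1) ^ 2)
       * (10::real) powr (real l * (real n - real t))"
proof -
  define m where "m = ndigits (n + 1) - 1"
  have m1: "ndigits (n + 1) = m + 1" unfolding m_def using ndigits_pos[of "n+1"] by simp
  have b1: "10 ^ m \<le> n + 1" "n + 1 < 10 ^ (m + 1)"
    using ndigits_bounds[of "n+1"] m1 by auto
  have "\<lceil>log (real 10) (real (n + 2))\<rceil> = int m + 1"
    by (subst ceiling_log_nat_eq_powr_iff) (use b1 in auto)
  then have "\<lceil>log 10 (real n + 2)\<rceil> = int m + 1" by (simp add: add.commute)
  then have lm: "l = m + 1" unfolding l_def by simp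
  define p where "p = (10::nat) ^ m"
  have p1: "p \<ge> 1" unfolding p_def by simp
  have tp: "t = p - 1" unfolding t_def p_def lm by simp
  define Q where "Q = (10::real) * real p"
  define A where "A = - (Q * real p + 9 * real p) / (Q - 1) ^ 2"
  define B where "B = - 1 / (Q - 1)"
  define C where "C = real (Sm t) - A"
  have Q1: "Q - 1 \<noteq> 0" unfolding Q_def using p1 by simp
  have Ql: "(10::real) ^ l = Q" unfolding Q_def p_def lm by simp
  have cl: "\<And>k. t + k + 1 < 10 ^ (m + 1) \<Longrightarrow> real (Sm (t + k)) = A + B * real k + C * Q ^ k"
    using Sm_closed unfolding tp p_def Q_def A_def B_def C_def by blast
  have p10: "10 * p \<ge> p + 9" using p1 by simp
  have pm: "10 ^ (m+1) = 10 * p" unfolding p_def by simp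
  have s1: "real (Sm (t + 1)) = A + B + C * Q" using cl[of 1] p10 p1 unfolding pm tp by simp
  have s2: "real (Sm (t + 2)) = A + 2 * B + C * Q ^ 2" using cl[of 2] p10 p1 unfolding pm tp by simp
  have theta: "(real (Sm (t + 2)) - 2 * real (Sm (t + 1)) + real (Sm t)) / (Q - 1) ^ 2 = C"
  proof -
    have "real (Sm (t + 2)) - 2 * real (Sm (t + 1)) + real (Sm t) = C * (Q - 1) ^ 2"
      using s1 s2 unfolding C_def by (simp add: algebra_simps power2_eq_square)
    then show ?thesis using Q1 by simp
  qed
  have nt: "t \<le> n" using b1 unfolding tp p_def by simp
  have nn: "n = t + (n - t)" using nt by simp
  have sn: "real (Sm n) = A + B * real (n - t) + C * Q ^ (n - t)"
    using cl[of "n - t"] nt b1 by simp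
  have pw: "(10::real) powr (real l * (real n - real t)) = Q ^ (n - t)"
  proof -
    have "real l * (real n - real t) = real (l * (n - t))" using nt by simp
    then have "(10::real) powr (real l * (real n - real t)) = 10 ^ (l * (n - t))"
      by (simp only: powr_realpow[of 10, symmetric])
    also have "\<dots> = Q ^ (n - t)" using Ql by (simp add: power_mult)
    finally show ?thesis .
  qed
  have A2: "(10::real) ^ (2 * l - 1) + 9 * 10 ^ (l - 1) = Q * real p + 9 * real p"
    unfolding Q_def p_def lm by (simp add: power_add mult_2 power_mult_distrib)
  show ?thesis
    unfolding pw Ql A2 theta using sn nt unfolding A_def B_def by simp
qed

end
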